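(* Let $\kappa_i,\theta_i,\sigma_i>0$ and $\varepsilon_i\ge0$ for $i=1,2$, and let $\gamma\in[-\sqrt{\varepsilon_1\varepsilon_2},\sqrt{\varepsilon_1\varepsilon_2}]$. Set $\beta_i=\varepsilon_i/\sigma_i^2$, $\alpha_i=\gamma/\sigma_i^2$, $\nu_i=2\kappa_i\theta_i/\sigma_i^2$. Define on $\mathbb R_+^2$ the drift $$A_1(x)=\kappa_1(1+\beta_1x_2)(\theta_1-x_1)+\kappa_2\alpha_2x_1(\theta_2-x_2),\quad A_2(x)=\kappa_2(1+\beta_2x_1)(\theta_2-x_2)+\kappa_1\alpha_1x_2(\theta_1-x_1),$$ the diffusion matrix $$S(x)=\begin{pmatrix}\sigma_1^2x_1+\varepsilon_1x_1x_2 & \gamma x_1x_2\\ \gamma x_1x_2 & \sigma_2^2x_2+\varepsilon_2x_1x_2\end{pmatrix},$$ and the probability density $\pi(x)=\pi_{\nu_1}(x_1)\pi_{\nu_2}(x_2)$, where $\pi_{\nu_i}(y)=\frac{(\nu_i/\theta_i)^{\nu_i}}{\Gamma(\nu_i)}y^{\nu_i-1}e^{-\nu_iy/\theta_i}$. Then the generator $Lf=A_1\partial_{x_1}f+A_2\partial_{x_2}f+\frac12\big[S_{11}\partial_{x_1x_1}f+2S_{12}\partial_{x_1x_2}f+S_{22}\partial_{x_2x_2}f\big]$ of the diffusion $dX=A(X)\,dt+B(X)\,dw$ (with $BB^T=S$ and $w$ a two-dimensional standard Wiener process) satisfies, for every smooth $f$ on the open quadrant $(0,\infty)^2$, $$Lf(x)=\frac{1}{2\pi(x)}\nabla\cdot\big(\pi(x)S(x)\nabla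 f(x)\big);$$ that is, the process is reversible with respect to the product of the two Gamma distributions $\pi_{\nu_1,\nu_2}$.
   Context: This is the "asymptotically decoupling correlated" (ADC) two-factor model; when $\varepsilon_1=\varepsilon_2=\gamma=0$ it reduces to two independent CIR processes. *)

theory Defs
  imports "HOL-Analysis.Analysis"
begin

definition pd1 :: "(real \<Rightarrow> real \<Rightarrow> real) \<Rightarrow> real \<Rightarrow> real \<Rightarrow> real" where
  "pd1 f = (\<lambda>x1 x2. deriv (\<lambda>t. f t x2) x1)"

definition pd2 :: "(real \<Rightarrow> real \<Rightarrow> real) \<Rightarrow> real \<Rightarrow> real \<Rightarrow> real" where
  "pd2 f = (\<lambda>x1 x2. deriv (\<lambda>t. f x1 t) x2)"

text \<open>Iterated partial derivative: False means d/dx1, True means d/dx2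
  (the head of the list is applied last).\<close>
fun iter_pd :: "bool list \<Rightarrow> (real \<Rightarrow> real \<Rightarrow> real) \<Rightarrow> real \<Rightarrow> real \<Rightarrow> real" where
  "iter_pd [] f = f"
| "iter_pd (b # bs) f = (if b then pd2 (iter_pd bs f) else pd1 (iter_pd bs f))"

definition open_quadrant :: "(real \<times> real) set" where
  "open_quadrant = {0<..} \<times> {0<..}"

definition smooth_on_quadrant :: "(real \<Rightarrow> real \<Rightarrow> real) \<Rightarrow> bool" where
  "smooth_on_quadrant f \<longleftrightarrow>
     (\<forall>ds. continuous_on open_quadrant (\<lambda>(x1, x2). iter_pd ds f x1 x2) \<and>
       (\<forall>x1 x2. x1 > 0 \<longrightarrow> x2 > 0 \<longrightarrow>
          (\<lambda>t. iter_pd ds f t x2) differentiable (at x1) \<and>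
          (\<lambda>t. iter_pd ds f x1 t) differentiable (at x2)))"

text \<open>Gamma density with shape nu and mean theta (rate nu/theta).\<close>
definition gamma_density :: "real \<Rightarrow> real \<Rightarrow> real \<Rightarrow> real" where
  "gamma_density \<nu> \<theta> y = (\<nu> / \<theta>) powr \<nu> / Gamma \<nu> * y powr (\<nu> - 1) * exp (- \<nu> * y / \<theta>)"

end

theory Submission
  imports Defs
begin

lemma sm_d1:
  assumes "smooth_on_quadrant f" "a > 0" "b > 0"
  shows "((\<lambda>t. iter_pd ds f t b) has_real_derivative iter_pd (False # ds) f a b) (at a)"
proof -
  have "(\<lambda>t. iter_pd ds f t b) differentiable (at a)"
    using assms unfolding smooth_on_quadrant_def by blast
  then show ?thesis by (simp add: DERIV_deriv_iff_real_differentiable pd1_def)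
qed

lemma sm_d2:
  assumes "smooth_on_quadrant f" "a > 0" "b > 0"
  shows "((\<lambda>t. iter_pd ds f a t) has_real_derivative iter_pd (True # ds) f a b) (at b)"
proof -
  have "(\<lambda>t. iter_pd ds f a t) differentiable (at b)"
    using assms unfolding smooth_on_quadrant_def by blast
  then show ?thesis by (simp add: DERIV_deriv_iff_real_differentiable pd2_def)
qed

lemma sm_cont:
  assumes "smooth_on_quadrant f" "a > 0" "b > 0" "e > 0"
  shows "\<exists>d>0. \<forall>a' b'. a' > 0 \<longrightarrow> b' > 0 \<longrightarrow> \<bar>a' - a\<bar> < d \<longrightarrow> \<bar>b' - b\<bar> < d \<longrightarrow>
     \<bar>iter_pd ds f a' b' - iter_pd ds f a b\<bar> < e"
proof -
  have "continuous_on open_quadrant (\<lambda>(x1, x2). iter_pd ds f x1 x2)"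
    using assms unfolding smooth_on_quadrant_def by blast
  moreover have "(a,b) \<in> open_quadrant" using assms by (simp add: open_quadrant_def)
  ultimately obtain d where d: "d > 0" and
    H: "\<And>p. p \<in> open_quadrant \<Longrightarrow> dist p (a,b) < d \<Longrightarrow>
        dist ((\<lambda>(x1, x2). iter_pd ds f x1 x2) p) ((\<lambda>(x1, x2). iter_pd ds f x1 x2) (a,b)) < e"
    using assms(4) unfolding continuous_on_iff by metis
  show ?thesis
  proof (intro exI[of _ "d/2"] conjI allI impI)
    show "d/2 > 0" using d by simp
    fix a' b' :: real
    assume h: "a' > 0" "b' > 0" "\<bar>a' - a\<bar> < d/2" "\<bar>b' - b\<bar> < d/2"
    have "dist (a',b') (a,b) \<le> dist a' a + dist b' b"
      unfolding dist_Pair_Pair by (simp add: sqrt_sum_squares_le_sum)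
    then have "dist (a',b') (a,b) < d" using h by (simp add: dist_real_def)
    then show "\<bar>iter_pd ds f a' b' - iter_pd ds f a b\<bar> < e"
      using H[of "(a',b')"] h by (simp add: open_quadrant_def dist_real_def)
  qed
qed

lemma delta_eq1:
  assumes sm: "smooth_on_quadrant f" and x: "x > 0" and y: "y > 0" and h: "h > 0"
  shows "\<exists>\<xi> \<eta>. x < \<xi> \<and> \<xi> < x + h \<and> y < \<eta> \<and> \<eta> < y + h \<and>
     f (x+h) (y+h) - f (x+h) y - f x (y+h) + f x y = h * h * pd2 (pd1 f) \<xi> \<eta>"
proof -
  have "\<exists>z. x < z \<and> z < x + h \<and>
     (f (x+h) (y+h) - f (x+h) y) - (f x (y+h) - f x y) = ((x+h) - x) * (pd1 f z (y+h) - pd1 f z y)"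
  proof (rule MVT2)
    fix t assume "x \<le> t" "t \<le> x + h"
    then have t: "t > 0" using x by simp
    show "((\<lambda>t. f t (y+h) - f t y) has_real_derivative (pd1 f t (y+h) - pd1 f t y)) (at t)"
      using sm_d1[OF sm t, of "y+h" "[]"] sm_d1[OF sm t y, of "[]"] y h
      by (auto intro!: derivative_intros)
  qed (use h in simp)
  then obtain \<xi> where \<xi>: "x < \<xi>" "\<xi> < x + h"
    "(f (x+h) (y+h) - f (x+h) y) - (f x (y+h) - f x y) = h * (pd1 f \<xi> (y+h) - pd1 f \<xi> y)"
    by auto
  have "\<exists>z. y < z \<and> z < y + h \<and> pd1 f \<xi> (y+h) - pd1 f \<xi> y = ((y+h) - y) * pd2 (pd1 f) \<xi> z"
  proof (rule MVT2)
    fix t assume "y \<le> t" "t \<le> y + h"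
    then have t: "t > 0" using y by simp
    have "\<xi> > 0" using \<xi> x by simp
    from sm_d2[OF sm this t, of "[False]"]
    show "((\<lambda>t. pd1 f \<xi> t) has_real_derivative pd2 (pd1 f) \<xi> t) (at t)" by simp
  qed (use h in simp)
  then obtain \<eta> where \<eta>: "y < \<eta>" "\<eta> < y + h" "pd1 f \<xi> (y+h) - pd1 f \<xi> y = h * pd2 (pd1 f) \<xi> \<eta>"
    by auto
  show ?thesis using \<xi> \<eta> by (intro exI[of _ \<xi>] exI[of _ \<eta>]) (auto simp: algebra_simps)
qed

lemma delta_eq2:
  assumes sm: "smooth_on_quadrant f" and x: "x > 0" and y: "y > 0" and h: "h > 0"
  shows "\<exists>\<xi> \<eta>. x < \<xi> \<and> \<xi> < x + h \<and> y < \<eta> \<and> \<eta> < y + h \<and>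
     f (x+h) (y+h) - f (x+h) y - f x (y+h) + f x y = h * h * pd1 (pd2 f) \<xi> \<eta>"
proof -
  have "\<exists>z. y < z \<and> z < y + h \<and>
     (f (x+h) (y+h) - f x (y+h)) - (f (x+h) y - f x y) = ((y+h) - y) * (pd2 f (x+h) z - pd2 f x z)"
  proof (rule MVT2)
    fix t assume "y \<le> t" "t \<le> y + h"
    then have t: "t > 0" using y by simp
    show "((\<lambda>t. f (x+h) t - f x t) has_real_derivative (pd2 f (x+h) t - pd2 f x t)) (at t)"
      using sm_d2[OF sm _ t, of "x+h" "[]"] sm_d2[OF sm x t, of "[]"] x h
      by (auto intro!: derivative_intros)
  qed (use h in simp)
  then obtain \<eta> where \<eta>: "y < \<eta>" "\<eta> < y + h"
    "(f (x+h) (y+h) - f x (y+h)) - (f (x+h) y - f x y) = h * (pd2 f (x+h) \<eta> - pd2 f x \<eta>)"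
    by auto
  have "\<exists>z. x < z \<and> z < x + h \<and> pd2 f (x+h) \<eta> - pd2 f x \<eta> = ((x+h) - x) * pd1 (pd2 f) z \<eta>"
  proof (rule MVT2)
    fix t assume "x \<le> t" "t \<le> x + h"
    then have t: "t > 0" using x by simp
    have "\<eta> > 0" using \<eta> y by simp
    from sm_d1[OF sm t this, of "[True]"]
    show "((\<lambda>t. pd2 f t \<eta>) has_real_derivative pd1 (pd2 f) t \<eta>) (at t)" by simp
  qed (use h in simp)
  then obtain \<xi> where \<xi>: "x < \<xi>" "\<xi> < x + h" "pd2 f (x+h) \<eta> - pd2 f x \<eta> = h * pd1 (pd2 f) \<xi> \<eta>"
    by auto
  show ?thesis using \<xi> \<eta> by (intro exI[of _ \<xi>] exI[of _ \<eta>]) (auto simp: algebra_simps)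
qed

lemma absaux: "\<bar>(p::real) - X\<bar> < e \<Longrightarrow> \<bar>p - Y\<bar> < e \<Longrightarrow> e = \<bar>X - Y\<bar> / 2 \<Longrightarrow> False"
  by (auto simp: abs_if split: if_splits)

lemma schwarz:
  assumes sm: "smooth_on_quadrant f" and x: "x > 0" and y: "y > 0"
  shows "pd2 (pd1 f) x y = pd1 (pd2 f) x y"
proof (rule ccontr)
  assume ne: "pd2 (pd1 f) x y \<noteq> pd1 (pd2 f) x y"
  define e where "e = \<bar>pd2 (pd1 f) x y - pd1 (pd2 f) x y\<bar> / 2"
  have e: "e > 0" using ne by (simp add: e_def)
  obtain d1 where d1: "d1 > 0" and D1: "\<And>a' b'. a' > 0 \<Longrightarrow> b' > 0 \<Longrightarrow> \<bar>a' - x\<bar> < d1 \<Longrightarrow> \<bar>b' - y\<bar> < d1 \<Longrightarrow>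
     \<bar>iter_pd [True, False] f a' b' - iter_pd [True, False] f x y\<bar> < e"
    using sm_cont[OF sm x y e, of "[True, False]"] by blast
  obtain d2 where d2: "d2 > 0" and D2: "\<And>a' b'. a' > 0 \<Longrightarrow> b' > 0 \<Longrightarrow> \<bar>a' - x\<bar> < d2 \<Longrightarrow> \<bar>b' - y\<bar> < d2 \<Longrightarrow>
     \<bar>iter_pd [False, True] f a' b' - iter_pd [False, True] f x y\<bar> < e"
    using sm_cont[OF sm x y e, of "[False, True]"] by blast
  define h where "h = min d1 d2 / 2"
  have h: "h > 0" "h < d1" "h < d2" using d1 d2 by (auto simp: h_def)
  obtain \<xi>1 \<eta>1 where 1: "x < \<xi>1" "\<xi>1 < x + h" "y < \<eta>1" "\<eta>1 < y + h"
     "f (x+h) (y+h) - f (x+h) y - f x (y+h) + f x y = h * h * pd2 (pd1 f) \<xi>1 \<eta>1"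
    using delta_eq1[OF sm x y h(1)] by blast
  obtain \<xi>2 \<eta>2 where 2: "x < \<xi>2" "\<xi>2 < x + h" "y < \<eta>2" "\<eta>2 < y + h"
     "f (x+h) (y+h) - f (x+h) y - f x (y+h) + f x y = h * h * pd1 (pd2 f) \<xi>2 \<eta>2"
    using delta_eq2[OF sm x y h(1)] by blast
  have eq: "pd2 (pd1 f) \<xi>1 \<eta>1 = pd1 (pd2 f) \<xi>2 \<eta>2" using 1(5) 2(5) h(1) by simp
  have a: "\<bar>pd2 (pd1 f) \<xi>1 \<eta>1 - pd2 (pd1 f) x y\<bar> < e"
    using D1[of \<xi>1 \<eta>1] 1 h x y by simp
  have b: "\<bar>pd1 (pd2 f) \<xi>2 \<eta>2 - pd1 (pd2 f) x y\<bar> < e"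
    using D2[of \<xi>2 \<eta>2] 2 h x y by simp
  show False using absaux[OF a b[folded eq] e_def] .
qed

lemma gd_deriv:
  assumes "y > 0" "\<theta> > 0" "\<nu> > 0"
  shows "(gamma_density \<nu> \<theta> has_real_derivative gamma_density \<nu> \<theta> y * ((\<nu> - 1) / y - \<nu> / \<theta>)) (at y)"
proof -
  have dexp: "((\<lambda>y. exp (- \<nu> * y / \<theta>)) has_real_derivative exp (- \<nu> * y / \<theta>) * (- \<nu> / \<theta>)) (at y)"
    using assms by (auto intro!: derivative_eq_intros)
  have D: "((\<lambda>y. (\<nu> / \<theta>) powr \<nu> / Gamma \<nu> * y powr (\<nu> - 1) * exp (- \<nu> * y / \<theta>)) has_real_derivative
     (\<nu> / \<theta>) powr \<nu> / Gamma \<nu> * ((\<nu> - 1) * y powr (\<nu> - 1 - 1)) * exp (- \<nu> * y / \<theta>)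
     + (\<nu> / \<theta>) powr \<nu> / Gamma \<nu> * y powr (\<nu> - 1) * (exp (- \<nu> * y / \<theta>) * (- \<nu> / \<theta>))) (at y)"
    by (rule DERIV_cong[OF DERIV_mult[OF DERIV_cmult[OF has_real_derivative_powr[OF assms(1), of "\<nu> - 1"], of "(\<nu> / \<theta>) powr \<nu> / Gamma \<nu>"]
        dexp]]) (simp add: algebra_simps)
  have p: "y powr (\<nu> - 1 - 1) = y powr (\<nu> - 1) / y"
    using assms by (simp add: powr_diff power2_eq_square)
  have "(\<nu> / \<theta>) powr \<nu> / Gamma \<nu> * ((\<nu> - 1) * y powr (\<nu> - 1 - 1)) * exp (- \<nu> * y / \<theta>)
     + (\<nu> / \<theta>) powr \<nu> / Gamma \<nu> * y powr (\<nu> - 1) * (exp (- \<nu> * y / \<theta>) * (- \<nu> / \<theta>))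
     = gamma_density \<nu> \<theta> y * ((\<nu> - 1) / y - \<nu> / \<theta>)"
  proof -
    have g: "Gamma \<nu> \<noteq> 0" using Gamma_real_pos[OF assms(3)] by simp
    show ?thesis
    unfolding gamma_density_def p using assms g by (simp add: field_simps)
  qed
  with D show ?thesis unfolding gamma_density_def[abs_def] by simp
qed

lemma absaux2:
  fixes p X Y e :: real
  assumes "\<bar>p - X\<bar> < e" "\<bar>p - Y\<bar> < e" "e = \<bar>X - Y\<bar> / 2"
  shows False
  using assms by (auto simp: abs_if split: if_splits)

lemma pd1_I: "((\<lambda>t. G t b) has_real_derivative D) (at a) \<Longrightarrow> pd1 G a b = D"
  by (simp add: pd1_def DERIV_imp_deriv)

lemma pd2_I: "((\<lambda>t. G a t) has_real_derivative D) (at b) \<Longrightarrow> pd2 G a b = D"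
  by (simp add: pd2_def DERIV_imp_deriv)

lemma gd_pos: "y > 0 \<Longrightarrow> \<theta> > 0 \<Longrightarrow> \<nu> > 0 \<Longrightarrow> gamma_density \<nu> \<theta> y > 0"
  unfolding gamma_density_def by (simp add: Gamma_real_pos)

theorem mainTheorem3:
  fixes \<kappa>1 \<kappa>2 \<theta>1 \<theta>2 \<sigma>1 \<sigma>2 \<epsilon>1 \<epsilon>2 \<gamma> :: real
    and f :: "real \<Rightarrow> real \<Rightarrow> real"
  assumes "\<kappa>1 > 0" "\<kappa>2 > 0" "\<theta>1 > 0" "\<theta>2 > 0" "\<sigma>1 > 0" "\<sigma>2 > 0"
    and "\<epsilon>1 \<ge> 0" "\<epsilon>2 \<ge> 0"
    and "- sqrt (\<epsilon>1 * \<epsilon>2) \<le> \<gamma>" "\<gamma> \<le> sqrt (\<epsilon>1 * \<epsilon>2)"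
    and "smooth_on_quadrant f"
    and "x1 > 0" "x2 > 0"
  shows
    "let \<beta>1 = \<epsilon>1 / \<sigma>1\<^sup>2; \<beta>2 = \<epsilon>2 / \<sigma>2\<^sup>2;
         \<alpha>1 = \<gamma> / \<sigma>1\<^sup>2; \<alpha>2 = \<gamma> / \<sigma>2\<^sup>2;
         \<nu>1 = 2 * \<kappa>1 * \<theta>1 / \<sigma>1\<^sup>2; \<nu>2 = 2 * \<kappa>2 * \<theta>2 / \<sigma>2\<^sup>2;
         A1 = (\<lambda>y1 y2. \<kappa>1 * (1 + \<beta>1 * y2) * (\<theta>1 - y1) + \<kappa>2 * \<alpha>2 * y1 * (\<theta>2 - y2));
         A2 = (\<lambda>y1 y2. \<kappa>2 * (1 + \<beta>2 * y1) * (\<theta>2 - y2) + \<kappa>1 * \<alpha>1 * y2 * (\<theta>1 - y1));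
         S11 = (\<lambda>y1 y2. \<sigma>1\<^sup>2 * y1 + \<epsilon>1 * y1 * y2);
         S12 = (\<lambda>y1 y2. \<gamma> * y1 * y2);
         S22 = (\<lambda>y1 y2. \<sigma>2\<^sup>2 * y2 + \<epsilon>2 * y1 * y2);
         \<pi> = (\<lambda>y1 y2. gamma_density \<nu>1 \<theta>1 y1 * gamma_density \<nu>2 \<theta>2 y2);
         Lf = A1 x1 x2 * pd1 f x1 x2 + A2 x1 x2 * pd2 f x1 x2
              + 1/2 * (S11 x1 x2 * pd1 (pd1 f) x1 x2 + 2 * S12 x1 x2 * pd2 (pd1 f) x1 x2
                       + S22 x1 x2 * pd2 (pd2 f) x1 x2);
         divergence =
              pd1 (\<lambda>y1 y2. \<pi> y1 y2 * (S11 y1 y2 * pd1 f y1 y2 + S12 y1 y2 * pd2 f y1 y2)) x1 x2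
            + pd2 (\<lambda>y1 y2. \<pi> y1 y2 * (S12 y1 y2 * pd1 f y1 y2 + S22 y1 y2 * pd2 f y1 y2)) x1 x2
     in Lf = divergence / (2 * \<pi> x1 x2)"
proof -
  note sm = assms(11) and x1 = assms(12) and x2 = assms(13)
  define \<nu>1 where "\<nu>1 = 2 * \<kappa>1 * \<theta>1 / \<sigma>1\<^sup>2"
  define \<nu>2 where "\<nu>2 = 2 * \<kappa>2 * \<theta>2 / \<sigma>2\<^sup>2"
  have n1: "\<nu>1 > 0" and n2: "\<nu>2 > 0" using assms by (auto simp: \<nu>1_def \<nu>2_def)
  define G1 where "G1 = gamma_density \<nu>1 \<theta>1 x1"
  define G2 where "G2 = gamma_density \<nu>2 \<theta>2 x2"
  have G1: "G1 > 0" using gd_pos[OF x1 assms(3) n1] by (simp add: G1_def)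
  have G2: "G2 > 0" using gd_pos[OF x2 assms(4) n2] by (simp add: G2_def)
  have dG1: "(gamma_density \<nu>1 \<theta>1 has_real_derivative G1 * ((\<nu>1 - 1) / x1 - \<nu>1 / \<theta>1)) (at x1)"
    unfolding G1_def using gd_deriv[OF x1 assms(3) n1] .
  have dG2: "(gamma_density \<nu>2 \<theta>2 has_real_derivative G2 * ((\<nu>2 - 1) / x2 - \<nu>2 / \<theta>2)) (at x2)"
    unfolding G2_def using gd_deriv[OF x2 assms(4) n2] .
  have d1f: "((\<lambda>t. f t x2) has_real_derivative pd1 f x1 x2) (at x1)"
    using sm_d1[OF sm x1 x2, of "[]"] by simp
  have d1f1: "((\<lambda>t. pd1 f t x2) has_real_derivative pd1 (pd1 f) x1 x2) (at x1)"
    using sm_d1[OF sm x1 x2, of "[False]"] by simp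
  have d1f2: "((\<lambda>t. pd2 f t x2) has_real_derivative pd1 (pd2 f) x1 x2) (at x1)"
    using sm_d1[OF sm x1 x2, of "[True]"] by simp
  have d2f1: "((\<lambda>t. pd1 f x1 t) has_real_derivative pd2 (pd1 f) x1 x2) (at x2)"
    using sm_d2[OF sm x1 x2, of "[False]"] by simp
  have d2f2: "((\<lambda>t. pd2 f x1 t) has_real_derivative pd2 (pd2 f) x1 x2) (at x2)"
    using sm_d2[OF sm x1 x2, of "[True]"] by simp
  have sw: "pd1 (pd2 f) x1 x2 = pd2 (pd1 f) x1 x2" using schwarz[OF sm x1 x2] by simp
  have E1: "pd1 (\<lambda>y1 y2. gamma_density \<nu>1 \<theta>1 y1 * gamma_density \<nu>2 \<theta>2 y2 *
       ((\<sigma>1\<^sup>2 * y1 + \<epsilon>1 * y1 * y2) * pd1 f y1 y2 + \<gamma> * y1 * y2 * pd2 f y1 y2)) x1 x2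
    = G1 * ((\<nu>1 - 1) / x1 - \<nu>1 / \<theta>1) * G2 * ((\<sigma>1\<^sup>2 * x1 + \<epsilon>1 * x1 * x2) * pd1 f x1 x2 + \<gamma> * x1 * x2 * pd2 f x1 x2)
      + G1 * G2 * ((\<sigma>1\<^sup>2 + \<epsilon>1 * x2) * pd1 f x1 x2 + (\<sigma>1\<^sup>2 * x1 + \<epsilon>1 * x1 * x2) * pd1 (pd1 f) x1 x2
                   + \<gamma> * x2 * pd2 f x1 x2 + \<gamma> * x1 * x2 * pd1 (pd2 f) x1 x2)"
    apply (rule pd1_I)
    apply (rule derivative_eq_intros dG1 d1f1 d1f2 | simp)+
    by (simp add: G1_def G2_def algebra_simps)
  have E2: "pd2 (\<lambda>y1 y2. gamma_density \<nu>1 \<theta>1 y1 * gamma_density \<nu>2 \<theta>2 y2 *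
       (\<gamma> * y1 * y2 * pd1 f y1 y2 + (\<sigma>2\<^sup>2 * y2 + \<epsilon>2 * y1 * y2) * pd2 f y1 y2)) x1 x2
    = G1 * G2 * ((\<nu>2 - 1) / x2 - \<nu>2 / \<theta>2) * (\<gamma> * x1 * x2 * pd1 f x1 x2 + (\<sigma>2\<^sup>2 * x2 + \<epsilon>2 * x1 * x2) * pd2 f x1 x2)
      + G1 * G2 * (\<gamma> * x1 * pd1 f x1 x2 + \<gamma> * x1 * x2 * pd2 (pd1 f) x1 x2
                   + (\<sigma>2\<^sup>2 + \<epsilon>2 * x1) * pd2 f x1 x2 + (\<sigma>2\<^sup>2 * x2 + \<epsilon>2 * x1 * x2) * pd2 (pd2 f) x1 x2)"
    apply (rule pd2_I)
    apply (rule derivative_eq_intros dG2 d2f1 d2f2 | simp)+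
    by (simp add: G1_def G2_def algebra_simps)
  show ?thesis
    unfolding Let_def \<nu>1_def[symmetric] \<nu>2_def[symmetric] E1 E2 G1_def[symmetric] G2_def[symmetric] sw
    using G1 G2 x1 x2 assms(3,4,5,6) by (simp add: field_simps \<nu>1_def \<nu>2_def power2_eq_square)
qed

end
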